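(* Let $\mathcal{C}$ be a category and $A$ an object of $\mathcal{C}$ with $D(A)<\infty$. Then $D(A)=SD(A)$.
   Context: In a category $\mathcal{C}$, $X\leqslant^d Y$ means there are morphisms $f:X\to Y$, $g:Y\to X$ with $g\circ f=\mathrm{id}_X$. $X<^s Y$ means $X\leqslant^d Y$ holds but $Y\leqslant^d X$ fails; $X<^p Y$ means $X\leqslant^d Y$ and $X\not\cong Y$. A chain (resp. $s$-chain) of length $k$ for $A$ is $X_k<^p\cdots<^p X_1\leqslant^d A$ (resp. $X_k<^s\cdots<^s X_1\leqslant^d A$); the depth $D(A)$ (resp. strong depth $SD(A)$) is the supremum of their lengths. *)

theory Defs
  imports Main "HOL-Library.Extended_Nat"
begin

text \<open>Hom X Y is the set of morphisms X -> Y, cmp X Y Z g f is the composite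
  g o f of f : X -> Y and g : Y -> Z, and ident X is the identity of X.\<close>

definition category ::
  "('o \<Rightarrow> 'o \<Rightarrow> 'm set) \<Rightarrow> ('o \<Rightarrow> 'o \<Rightarrow> 'o \<Rightarrow> 'm \<Rightarrow> 'm \<Rightarrow> 'm) \<Rightarrow> ('o \<Rightarrow> 'm) \<Rightarrow> bool" where
  "category Hom cmp ident \<longleftrightarrow>
     (\<forall>X. ident X \<in> Hom X X) \<and>
     (\<forall>X Y Z f g. f \<in> Hom X Y \<longrightarrow> g \<in> Hom Y Z \<longrightarrow> cmp X Y Z g f \<in> Hom X Z) \<and>
     (\<forall>X Y f. f \<in> Hom X Y \<longrightarrow> cmp X Y Y (ident Y) f = f \<and> cmp X X Y f (ident X) = f) \<and>
     (\<forall>W X Y Z f g h. f \<in> Hom W X \<longrightarrow> g \<in> Hom X Y \<longrightarrow> h \<in> Hom Y Z \<longrightarrow>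
        cmp W X Z h (cmp W X Y g f) = cmp W Y Z (cmp X Y Z h g) f)"

definition dleq where
  "dleq Hom cmp ident X Y \<longleftrightarrow>
     (\<exists>f g. f \<in> Hom X Y \<and> g \<in> Hom Y X \<and> cmp X Y X g f = ident X)"

definition iso_obj where
  "iso_obj Hom cmp ident X Y \<longleftrightarrow>
     (\<exists>f g. f \<in> Hom X Y \<and> g \<in> Hom Y X \<and> cmp X Y X g f = ident X \<and> cmp Y X Y f g = ident Y)"

definition sless where
  "sless Hom cmp ident X Y \<longleftrightarrow> dleq Hom cmp ident X Y \<and> \<not> dleq Hom cmp ident Y X"

definition pless where
  "pless Hom cmp ident X Y \<longleftrightarrow> dleq Hom cmp ident X Y \<and> \<not> iso_obj Hom cmp ident X Y"

definition chain_lengths where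
  "chain_lengths Hom cmp ident R A =
     {k::nat. k \<ge> 1 \<and> (\<exists>X :: nat \<Rightarrow> 'o. dleq Hom cmp ident (X 1) A \<and>
                 (\<forall>i. 1 \<le> i \<and> i < k \<longrightarrow> R (X (Suc i)) (X i)))}"

definition depth where
  "depth Hom cmp ident A =
     Sup (enat ` chain_lengths Hom cmp ident (pless Hom cmp ident) A)"

definition strong_depth where
  "strong_depth Hom cmp ident A =
     Sup (enat ` chain_lengths Hom cmp ident (sless Hom cmp ident) A)"

end

theory Submission
  imports Defs
begin

lemma sless_pless: "sless Hom cmp ident X Y \<Longrightarrow> pless Hom cmp ident X Y"
  unfolding sless_def pless_def iso_obj_def dleq_def by blast

lemma iso_sym: "iso_obj Hom cmp ident X Y \<Longrightarrow> iso_obj Hom cmp ident Y X"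
  unfolding iso_obj_def by blast

lemma chain_mono:
  assumes "\<And>x y. R x y \<Longrightarrow> S x y"
  shows "chain_lengths Hom cmp ident R A \<subseteq> chain_lengths Hom cmp ident S A"
  unfolding chain_lengths_def using assms by blast

lemma all_lengths:
  assumes k: "k \<in> chain_lengths Hom cmp ident (pless Hom cmp ident) A"
    and X: "dleq Hom cmp ident (X 1) A"
      "\<forall>j. 1 \<le> j \<and> j < k \<longrightarrow> pless Hom cmp ident (X (Suc j)) (X j)"
    and i: "1 \<le> i" "i < k" and d: "dleq Hom cmp ident (X i) (X (Suc i))"
    and n: "n \<ge> 1"
  shows "n \<in> chain_lengths Hom cmp ident (pless Hom cmp ident) A"
proof -
  define Z where "Z j = (if j \<le> i then X j else if even (j - i) then X i else X (Suc i))" for j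
  have p1: "pless Hom cmp ident (X (Suc i)) (X i)" using X i by auto
  have p2: "pless Hom cmp ident (X i) (X (Suc i))"
    using p1 d iso_sym[of Hom cmp ident "X i" "X (Suc i)"] unfolding pless_def by blast
  have "pless Hom cmp ident (Z (Suc j)) (Z j)" if "1 \<le> j" for j
  proof (cases "Suc j \<le> i")
    case True then show ?thesis using X that i by (auto simp: Z_def)
  next
    case False
    show ?thesis
    proof (cases "j = i")
      case True then show ?thesis using p1 by (simp add: Z_def)
    next
      case F2: False
      then have ji: "j > i" using False by simp
      then have "Suc j - i = Suc (j - i)" by simp
      then show ?thesis using ji p1 p2 by (auto simp: Z_def)
    qed
  qed
  moreover have "Z 1 = X 1" using i by (simp add: Z_def)
  ultimately have "dleq Hom cmp ident (Z 1) A \<and>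
    (\<forall>j. 1 \<le> j \<and> j < n \<longrightarrow> pless Hom cmp ident (Z (Suc j)) (Z j))" using X by auto
  then show ?thesis unfolding chain_lengths_def using n by blast
qed

theorem corollary2p16:
  fixes Hom :: "'o \<Rightarrow> 'o \<Rightarrow> 'm set"
    and cmp :: "'o \<Rightarrow> 'o \<Rightarrow> 'o \<Rightarrow> 'm \<Rightarrow> 'm \<Rightarrow> 'm"
    and ident :: "'o \<Rightarrow> 'm"
    and A :: 'o
  assumes "category Hom cmp ident"
    and fin: "depth Hom cmp ident A < \<infinity>"
  shows "depth Hom cmp ident A = strong_depth Hom cmp ident A"
proof -
  have sub1: "chain_lengths Hom cmp ident (sless Hom cmp ident) A
      \<subseteq> chain_lengths Hom cmp ident (pless Hom cmp ident) A"
    by (rule chain_mono) (rule sless_pless)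
  have sub2: "chain_lengths Hom cmp ident (pless Hom cmp ident) A
      \<subseteq> chain_lengths Hom cmp ident (sless Hom cmp ident) A"
  proof
    fix k assume k: "k \<in> chain_lengths Hom cmp ident (pless Hom cmp ident) A"
    then obtain X where X: "k \<ge> 1" "dleq Hom cmp ident (X 1) A"
      "\<forall>j. 1 \<le> j \<and> j < k \<longrightarrow> pless Hom cmp ident (X (Suc j)) (X j)"
      unfolding chain_lengths_def by blast
    have "sless Hom cmp ident (X (Suc j)) (X j)" if j: "1 \<le> j" "j < k" for j
    proof (rule ccontr)
      assume ns: "\<not> ?thesis"
      have d: "dleq Hom cmp ident (X j) (X (Suc j))"
        using ns X(3) j unfolding sless_def pless_def by blast
      have all: "n \<in> chain_lengths Hom cmp ident (pless Hom cmp ident) A" if "n \<ge> 1" for n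
        using all_lengths[OF k X(2,3) j d that] .
      obtain m where m: "depth Hom cmp ident A = enat m" using fin by (cases "depth Hom cmp ident A") auto
      have "enat (Suc m) \<le> depth Hom cmp ident A"
        unfolding depth_def by (rule Sup_upper) (use all in auto)
      with m show False by simp
    qed
    then show "k \<in> chain_lengths Hom cmp ident (sless Hom cmp ident) A"
      unfolding chain_lengths_def using X by blast
  qed
  from sub1 sub2 show ?thesis unfolding depth_def strong_depth_def by simp
qed

end
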